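(* For $m\ge 2$ there is an injective $\mathcal R$-morphism $g:C_m'\to C_2'$ such that for all $i,j<m$, \[ g(p_i)\cdot g(q_j)=\delta_{i,j}\quad\text{and}\quad p_0\cdot g(q_j)=0=g(p_i)\cdot q_0, \] where $p_i,q_j$ denote the congruence classes of $\{p_i\},\{q_j\}$ in $C_m'$ and in $C_2'$ respectively.
   Context: An $\mathcal R$-dioid is a dioid in which every regular subset of its multiplicative monoid has a supremum $\sum A$ with $\sum(AB)=(\sum A)(\sum B)$ (equivalently a $*$-continuous Kleene algebra); an $\mathcal R$-morphism is a dioid morphism preserving suprema of regular sets; an $\mathcal R$-congruence is a semiring congruence $\rho$ such that regular sets with equal downward closures modulo $\rho$ have congruent suprema. For $k\ge1$, $\Delta_k=\{p_0,\dots,p_{k-1},q_0,\dots,q_{k-1}\}$ and the polycyclic $\mathcal R$-dioid is $C_k'=\mathcal R\Delta_k^*/\rho$, where $\mathcal R\Delta_k^*$ is the algebra of regular languages over $\Delta_k$ and $\rho$ the least $\mathcal R$-congruence containing $p_iq_j=\delta_{i,j}$ for $i,j<k$ ($\delta$ the Kronecker delta). *)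

theory Defs
  imports Main
begin

inductive_set mstar :: "('a \<Rightarrow> 'a \<Rightarrow> 'a) \<Rightarrow> 'a \<Rightarrow> 'a set \<Rightarrow> 'a set"
  for mult :: "'a \<Rightarrow> 'a \<Rightarrow> 'a" and one :: 'a and A :: "'a set" where
  mstar_one: "one \<in> mstar mult one A"
| mstar_step: "a \<in> A \<Longrightarrow> x \<in> mstar mult one A \<Longrightarrow> mult a x \<in> mstar mult one A"

definition setmult :: "('a \<Rightarrow> 'a \<Rightarrow> 'a) \<Rightarrow> 'a set \<Rightarrow> 'a set \<Rightarrow> 'a set" where
  "setmult mult A B = {mult a b | a b. a \<in> A \<and> b \<in> B}"

inductive rat :: "'a set \<Rightarrow> ('a \<Rightarrow> 'a \<Rightarrow> 'a) \<Rightarrow> 'a \<Rightarrow> 'a set \<Rightarrow> bool"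
  for U :: "'a set" and mult :: "'a \<Rightarrow> 'a \<Rightarrow> 'a" and one :: 'a where
  rat_empty: "rat U mult one {}"
| rat_single: "a \<in> U \<Longrightarrow> rat U mult one {a}"
| rat_union: "rat U mult one A \<Longrightarrow> rat U mult one B \<Longrightarrow> rat U mult one (A \<union> B)"
| rat_prod: "rat U mult one A \<Longrightarrow> rat U mult one B \<Longrightarrow> rat U mult one (setmult mult A B)"
| rat_star: "rat U mult one A \<Longrightarrow> rat U mult one (mstar mult one A)"

datatype letter = P nat | Q nat

definition Delta :: "nat \<Rightarrow> letter set" where
  "Delta k = P ` {..<k} \<union> Q ` {..<k}"

type_synonym lang = "letter list set"

definition Reg :: "nat \<Rightarrow> lang set" where
  "Reg k = {L. rat {[x] | x. x \<in> Delta k} (@) [] L}"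

definition conc :: "lang \<Rightarrow> lang \<Rightarrow> lang" (infixl "@@" 75) where
  "L @@ M = {u @ v | u v. u \<in> L \<and> v \<in> M}"

text \<open>Regular subsets of the multiplicative monoid of the R-dioid R Delta_k^*.\<close>
definition ratfam :: "nat \<Rightarrow> lang set \<Rightarrow> bool" where
  "ratfam k A = rat (Reg k) (@@) {[]} A"

definition leq_mod :: "(lang \<times> lang) set \<Rightarrow> lang \<Rightarrow> lang \<Rightarrow> bool" where
  "leq_mod r a b \<longleftrightarrow> (a \<union> b, b) \<in> r"

definition semiring_cong :: "nat \<Rightarrow> (lang \<times> lang) set \<Rightarrow> bool" where
  "semiring_cong k r \<longleftrightarrow> equiv (Reg k) r \<and>
     (\<forall>a b c d. (a, b) \<in> r \<longrightarrow> (c, d) \<in> r \<longrightarrow>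
        (a \<union> c, b \<union> d) \<in> r \<and> (a @@ c, b @@ d) \<in> r)"

text \<open>Equal downward closures modulo r of the images of A and B means mutual
domination in the quotient order.\<close>
definition R_cong :: "nat \<Rightarrow> (lang \<times> lang) set \<Rightarrow> bool" where
  "R_cong k r \<longleftrightarrow> semiring_cong k r \<and>
     (\<forall>A B. ratfam k A \<longrightarrow> ratfam k B \<longrightarrow>
        (\<forall>a\<in>A. \<exists>b\<in>B. leq_mod r a b) \<longrightarrow> (\<forall>b\<in>B. \<exists>a\<in>A. leq_mod r b a) \<longrightarrow>
        (\<Union>A, \<Union>B) \<in> r)"

definition gens :: "nat \<Rightarrow> (lang \<times> lang) set" where
  "gens k = {({[P i]} @@ {[Q j]}, if i = j then {[]} else {}) | i j. i < k \<and> j < k}"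

text \<open>rho k: the least R-congruence containing p_i q_j = delta_ij.  C_k' = Reg k // rho k.\<close>
definition rho :: "nat \<Rightarrow> (lang \<times> lang) set" where
  "rho k = \<Inter>{r. R_cong k r \<and> gens k \<subseteq> r}"

definition is_lub_mod :: "nat \<Rightarrow> lang set \<Rightarrow> lang \<Rightarrow> bool" where
  "is_lub_mod k A s \<longleftrightarrow> s \<in> Reg k \<and> (\<forall>a\<in>A. leq_mod (rho k) a s) \<and>
     (\<forall>c\<in>Reg k. (\<forall>a\<in>A. leq_mod (rho k) a c) \<longrightarrow> leq_mod (rho k) s c)"

text \<open>g maps representatives to representatives, respects the congruences (so it
induces a map C_m' \<rightarrow> C_n'), the induced map is a dioid morphism and preserves
suprema of regular subsets (every regular subset of C_m' is the class image of a
regular family of representatives).\<close>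
definition R_morph :: "nat \<Rightarrow> nat \<Rightarrow> (lang \<Rightarrow> lang) \<Rightarrow> bool" where
  "R_morph m n g \<longleftrightarrow>
     (\<forall>L\<in>Reg m. g L \<in> Reg n) \<and>
     (\<forall>a b. (a, b) \<in> rho m \<longrightarrow> (g a, g b) \<in> rho n) \<and>
     (g {}, {}) \<in> rho n \<and> (g {[]}, {[]}) \<in> rho n \<and>
     (\<forall>a\<in>Reg m. \<forall>b\<in>Reg m. (g (a \<union> b), g a \<union> g b) \<in> rho n \<and> (g (a @@ b), g a @@ g b) \<in> rho n) \<and>
     (\<forall>A s. ratfam m A \<longrightarrow> is_lub_mod m A s \<longrightarrow> is_lub_mod n (g ` A) (g s))"

definition inj_mod :: "nat \<Rightarrow> nat \<Rightarrow> (lang \<Rightarrow> lang) \<Rightarrow> bool" where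
  "inj_mod m n g \<longleftrightarrow> (\<forall>a\<in>Reg m. \<forall>b\<in>Reg m. (g a, g b) \<in> rho n \<longrightarrow> (a, b) \<in> rho m)"

end

theory Submission
  imports Defs
begin

fun lstep :: "letter \<Rightarrow> (nat list \<times> nat list) option \<Rightarrow> (nat list \<times> nat list) option" where
  "lstep x None = None"
| "lstep (Q j) (Some (u, v)) = Some (j # u, v)"
| "lstep (P i) (Some ([], v)) = Some ([], i # v)"
| "lstep (P i) (Some (j # u, v)) = (if i = j then Some (u, v) else None)"

definition red :: "letter list \<Rightarrow> (nat list \<times> nat list) option" where
  "red w = foldr lstep w (Some ([], []))"

fun wd :: "nat list \<times> nat list \<Rightarrow> letter list" where
  "wd (u, v) = map Q u @ map P v"

fun rmul :: "(nat list \<times> nat list) option \<Rightarrow> (nat list \<times> nat list) option \<Rightarrow> (nat list \<times> nat list) option" where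
  "rmul None s = None"
| "rmul (Some r) s = foldr lstep (wd r) s"

lemma foldr_None: "foldr lstep xs None = None"
  by (induction xs) auto

lemma lstep_rmul: "lstep x (rmul r s) = rmul (lstep x r) s"
proof (cases r)
  case None then show ?thesis by simp
next
  case (Some r')
  obtain u v where r': "r' = (u, v)" by fastforce
  show ?thesis
  proof (cases x)
    case (Q j) then show ?thesis using Some r' by simp
  next
    case (P i)
    show ?thesis
    proof (cases u)
      case Nil then show ?thesis using Some r' P by simp
    next
      case (Cons j u')
      show ?thesis
      proof (cases "foldr lstep (map Q u' @ map P v) s")
        case None then show ?thesis using Some r' P Cons by simp
      next
        case (Some t) then show ?thesis using \<open>r = Some r'\<close> r' P Cons
          by (cases t) auto
      qed
    qed
  qed
qed

lemma foldr_red: "foldr lstep u s = rmul (red u) s"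
proof (induction u)
  case Nil then show ?case by (simp add: red_def)
next
  case (Cons x u)
  have "foldr lstep (x # u) s = lstep x (rmul (red u) s)" using Cons by simp
  also have "\<dots> = rmul (lstep x (red u)) s" by (rule lstep_rmul)
  also have "lstep x (red u) = red (x # u)" by (simp add: red_def)
  finally show ?case .
qed

lemma red_append: "red (u @ v) = rmul (red u) (red v)"
  by (metis foldr_append foldr_red red_def)

lemma red_mapP: "red (map P v) = Some ([], v)"
  by (induction v) (auto simp: red_def)

lemma red_wd: "red (wd r) = Some r"
proof -
  obtain u v where r: "r = (u, v)" by fastforce
  have "foldr lstep (map Q u) (Some ([], v)) = Some (u, v)"
    by (induction u) auto
  then show ?thesis using r red_mapP by (simp add: red_def)
qed

lemma rmul_None2: "rmul r None = None"
  by (cases r) (auto simp: foldr_None)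

lemma rmul_unit: "rmul (Some ([], [])) s = s" by simp

definition F :: "lang \<Rightarrow> (nat list \<times> nat list) set" where
  "F L = {r. \<exists>w\<in>L. red w = Some r}"

lemma F_union: "F (L \<union> M) = F L \<union> F M" by (auto simp: F_def)
lemma F_Union: "F (\<Union>A) = (\<Union>X\<in>A. F X)" by (auto simp: F_def)
lemma F_empty: "F {} = {}" by (auto simp: F_def)

lemma F_conc: "F (L @@ M) = {x. \<exists>r\<in>F L. \<exists>s\<in>F M. rmul (Some r) (Some s) = Some x}"
proof (rule set_eqI, rule iffI)
  fix x assume "x \<in> F (L @@ M)"
  then obtain u v where uv: "u \<in> L" "v \<in> M" "red (u @ v) = Some x"
    by (auto simp: F_def conc_def)
  then have "rmul (red u) (red v) = Some x" by (simp add: red_append)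
  then obtain r s where "red u = Some r" "red v = Some s"
    by (metis rmul.simps(1) rmul_None2 not_None_eq)
  moreover then have "r \<in> F L" "s \<in> F M" using uv by (auto simp: F_def)
  ultimately show "x \<in> {x. \<exists>r\<in>F L. \<exists>s\<in>F M. rmul (Some r) (Some s) = Some x}"
    using \<open>rmul (red u) (red v) = Some x\<close> by force
next
  fix x assume "x \<in> {x. \<exists>r\<in>F L. \<exists>s\<in>F M. rmul (Some r) (Some s) = Some x}"
  then obtain u v r s where "u \<in> L" "v \<in> M" "red u = Some r" "red v = Some s"
    "rmul (Some r) (Some s) = Some x" by (auto simp: F_def)
  then have "red (u @ v) = Some x" by (simp add: red_append)
  then show "x \<in> F (L @@ M)" unfolding F_def conc_def
    using \<open>u \<in> L\<close> \<open>v \<in> M\<close> by blast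
qed


section \<open>Regularity\<close>

abbreviation UU :: "nat \<Rightarrow> letter list set" where
  "UU k \<equiv> {[x] | x. x \<in> Delta k}"

lemma conc_setmult: "L @@ M = setmult (@) L M"
  by (simp add: conc_def setmult_def)

lemma mstar_empty: "mstar mult one {} = {one}"
  by (auto elim: mstar.cases intro: mstar.intros)

lemma Reg_empty: "{} \<in> Reg k" by (simp add: Reg_def rat.intros)

lemma Reg_unit: "{[]} \<in> Reg k"
proof -
  have "rat (UU k) (@) [] (mstar (@) [] {})" by (intro rat.intros)
  then show ?thesis by (simp add: Reg_def mstar_empty)
qed

lemma Reg_union: "L \<in> Reg k \<Longrightarrow> M \<in> Reg k \<Longrightarrow> L \<union> M \<in> Reg k"
  by (simp add: Reg_def rat.intros)

lemma Reg_conc: "L \<in> Reg k \<Longrightarrow> M \<in> Reg k \<Longrightarrow> L @@ M \<in> Reg k"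
  by (simp add: Reg_def conc_setmult rat.intros)

lemma Reg_star: "L \<in> Reg k \<Longrightarrow> mstar (@) [] L \<in> Reg k"
  by (simp add: Reg_def rat.intros)

lemma Reg_word: "set w \<subseteq> Delta k \<Longrightarrow> {w} \<in> Reg k"
proof (induction w)
  case Nil then show ?case by (simp add: Reg_unit)
next
  case (Cons x w)
  have "{[x]} \<in> Reg k" using Cons.prems by (auto simp: Reg_def intro: rat.intros)
  moreover have "{x # w} = {[x]} @@ {w}" by (auto simp: conc_def)
  ultimately show ?case using Cons Reg_conc by auto
qed

lemma mstar_words:
  assumes "x \<in> mstar (@) [] A" "\<forall>w\<in>A. set w \<subseteq> S"
  shows "set x \<subseteq> S"
  using assms by (induction rule: mstar.induct) auto

lemma Reg_words_all: assumes "L \<in> Reg k" shows "\<forall>w\<in>L. set w \<subseteq> Delta k"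
proof -
  have "rat (UU k) (@) [] L" using assms by (simp add: Reg_def)
  then show ?thesis
  proof (induction rule: rat.induct)
    case rat_empty then show ?case by simp
  next
    case rat_single then show ?case by auto
  next
    case rat_union then show ?case by auto
  next
    case rat_prod then show ?case by (fastforce simp: setmult_def)
  next
    case (rat_star A) then show ?case using mstar_words by blast
  qed
qed

lemma Reg_words: "L \<in> Reg k \<Longrightarrow> w \<in> L \<Longrightarrow> set w \<subseteq> Delta k"
  using Reg_words_all by blast

lemma Reg_iff_word: "{w} \<in> Reg k \<longleftrightarrow> set w \<subseteq> Delta k"
  using Reg_words Reg_word by blast

lemma mstar_fam_Reg:
  assumes "X \<in> mstar (@@) {[]} A" "\<forall>a\<in>A. a \<in> Reg k"
  shows "X \<in> Reg k"
  using assms by (induction rule: mstar.induct) (auto simp: Reg_unit Reg_conc)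

lemma Union_mstar: "\<Union> (mstar (@@) {[]} A) = mstar (@) [] (\<Union>A)"
proof
  show "\<Union> (mstar (@@) {[]} A) \<subseteq> mstar (@) [] (\<Union>A)"
  proof
    fix w assume "w \<in> \<Union> (mstar (@@) {[]} A)"
    then obtain X where X: "X \<in> mstar (@@) {[]} A" "w \<in> X" by blast
    then show "w \<in> mstar (@) [] (\<Union>A)"
    proof (induction arbitrary: w rule: mstar.induct)
      case mstar_one then show ?case by (auto intro: mstar.intros)
    next
      case (mstar_step a x) then show ?case
        by (auto simp: conc_def intro: mstar.intros)
    qed
  qed
next
  show "mstar (@) [] (\<Union>A) \<subseteq> \<Union> (mstar (@@) {[]} A)"
  proof
    fix w assume "w \<in> mstar (@) [] (\<Union>A)"
    then show "w \<in> \<Union> (mstar (@@) {[]} A)"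
    proof (induction rule: mstar.induct)
      case mstar_one then show ?case by (auto intro: mstar.intros)
    next
      case (mstar_step a x)
      then obtain X0 X where "a \<in> X0" "X0 \<in> A" "x \<in> X" "X \<in> mstar (@@) {[]} A" by blast
      then have "a @ x \<in> X0 @@ X" by (auto simp: conc_def)
      moreover have "X0 @@ X \<in> mstar (@@) {[]} A"
        using \<open>X0 \<in> A\<close> \<open>X \<in> mstar (@@) {[]} A\<close> by (rule mstar.intros)
      ultimately show ?case by blast
    qed
  qed
qed

lemma ratfam_Reg:
  assumes "ratfam k A"
  shows "\<Union>A \<in> Reg k \<and> (\<forall>X\<in>A. X \<in> Reg k)"
  using assms unfolding ratfam_def
proof (induction rule: rat.induct)
  case rat_empty then show ?case by (simp add: Reg_empty)
next
  case (rat_single a) then show ?case by simp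
next
  case (rat_union A B) then show ?case by (auto simp: Reg_union)
next
  case (rat_prod A B)
  have "\<Union> (setmult (@@) A B) = \<Union>A @@ \<Union>B"
    by (auto simp: setmult_def conc_def)
  then show ?case using rat_prod by (auto simp: setmult_def Reg_conc)
next
  case (rat_star A)
  then show ?case using Union_mstar mstar_fam_Reg Reg_star by metis
qed

lemma sing_mstar: "(\<lambda>w. {w}) ` mstar (@) [] A = mstar (@@) {[]} ((\<lambda>w. {w}) ` A)"
proof
  show "(\<lambda>w. {w}) ` mstar (@) [] A \<subseteq> mstar (@@) {[]} ((\<lambda>w. {w}) ` A)"
  proof
    fix X assume "X \<in> (\<lambda>w. {w}) ` mstar (@) [] A"
    then obtain x where x: "x \<in> mstar (@) [] A" "X = {x}" by blast
    from x(1) have "{x} \<in> mstar (@@) {[]} ((\<lambda>w. {w}) ` A)"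
    proof (induction rule: mstar.induct)
      case mstar_one then show ?case by (auto intro: mstar.intros)
    next
      case (mstar_step a x)
      have "{a @ x} = {a} @@ {x}" by (auto simp: conc_def)
      then show ?case using mstar_step by (auto intro: mstar.intros)
    qed
    then show "X \<in> mstar (@@) {[]} ((\<lambda>w. {w}) ` A)" using x by simp
  qed
next
  show "mstar (@@) {[]} ((\<lambda>w. {w}) ` A) \<subseteq> (\<lambda>w. {w}) ` mstar (@) [] A"
  proof
    fix X assume "X \<in> mstar (@@) {[]} ((\<lambda>w. {w}) ` A)"
    then show "X \<in> (\<lambda>w. {w}) ` mstar (@) [] A"
    proof (induction rule: mstar.induct)
      case mstar_one then show ?case by (auto intro: mstar.intros)
    next
      case (mstar_step a X)
      then obtain u x where "a = {u}" "u \<in> A" "X = {x}" "x \<in> mstar (@) [] A" by blast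
      moreover have "{u} @@ {x} = {u @ x}" by (auto simp: conc_def)
      ultimately show ?case by (auto intro: mstar.intros)
    qed
  qed
qed

lemma ratfam_sing:
  assumes "L \<in> Reg k"
  shows "ratfam k ((\<lambda>w. {w}) ` L)"
proof -
  have "rat (UU k) (@) [] L" using assms by (simp add: Reg_def)
  then show ?thesis unfolding ratfam_def
proof (induction rule: rat.induct)
  case rat_empty then show ?case by (simp add: rat.intros)
next
  case (rat_single a)
  then have "{a} \<in> Reg k" by (auto simp: Reg_def intro: rat.intros)
  then show ?case by (simp add: rat.intros)
next
  case (rat_union A B) then show ?case by (simp add: image_Un rat.intros)
next
  case (rat_prod A B)
  have "(\<lambda>w. {w}) ` setmult (@) A B = setmult (@@) ((\<lambda>w. {w}) ` A) ((\<lambda>w. {w}) ` B)"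
    by (auto simp: setmult_def conc_def)
  then show ?case using rat_prod by (simp add: rat.intros)
next
  case (rat_star A) then show ?case by (simp add: sing_mstar rat.intros)
qed
qed


section \<open>Characterisation of rho\<close>

definition K :: "nat \<Rightarrow> (lang \<times> lang) set" where
  "K k = {(a, b). a \<in> Reg k \<and> b \<in> Reg k \<and> F a = F b}"

lemma K_mem: "(a, b) \<in> K k \<longleftrightarrow> a \<in> Reg k \<and> b \<in> Reg k \<and> F a = F b"
  by (simp add: K_def)

lemma leq_K: "leq_mod (K k) a b \<Longrightarrow> F a \<subseteq> F b"
  by (auto simp: leq_mod_def K_def F_union)

lemma F_gen: "F ({[P i]} @@ {[Q j]}) = F (if i = j then {[]} else {})"
proof -
  have "{[P i]} @@ {[Q j]} = {[P i, Q j]}" by (auto simp: conc_def)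
  moreover have "red [P i, Q j] = (if i = j then Some ([], []) else None)"
    by (simp add: red_def)
  moreover have "red [] = Some ([], [])" by (simp add: red_def)
  ultimately show ?thesis by (auto simp: F_def)
qed

lemma R_cong_K: "R_cong k (K k)"
  unfolding R_cong_def semiring_cong_def
proof (intro conjI allI impI)
  show "equiv (Reg k) (K k)"
    by (rule equivI) (auto simp: K_def refl_on_def sym_def trans_def)
next
  fix a b c d assume "(a, b) \<in> K k" "(c, d) \<in> K k"
  then have h: "a \<in> Reg k" "b \<in> Reg k" "c \<in> Reg k" "d \<in> Reg k" "F a = F b" "F c = F d"
    by (simp_all add: K_mem)
  have "F (a @@ c) = F (b @@ d)" by (simp only: F_conc h(5) h(6))
  then show "(a @@ c, b @@ d) \<in> K k" unfolding K_mem using h Reg_conc by blast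
  have "F (a \<union> c) = F (b \<union> d)" by (simp only: F_union h(5) h(6))
  then show "(a \<union> c, b \<union> d) \<in> K k" unfolding K_mem using h Reg_union by blast
next
  fix A B assume A: "ratfam k A" and B: "ratfam k B"
    and AB: "\<forall>a\<in>A. \<exists>b\<in>B. leq_mod (K k) a b" and BA: "\<forall>b\<in>B. \<exists>a\<in>A. leq_mod (K k) b a"
  have sub: "(\<Union>X\<in>A. F X) \<subseteq> (\<Union>X\<in>B. F X)"
    if AB: "\<forall>a\<in>A. \<exists>b\<in>B. leq_mod (K k) a b" for A B
  proof
    fix x assume "x \<in> (\<Union>X\<in>A. F X)"
    then obtain a where a: "a \<in> A" "x \<in> F a" by blast
    from AB a(1) obtain b where b: "b \<in> B" "leq_mod (K k) a b" by blast
    from b(2) have "F a \<subseteq> F b" by (rule leq_K)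
    then show "x \<in> (\<Union>X\<in>B. F X)" using a(2) b(1) by blast
  qed
  have "F (\<Union>A) = F (\<Union>B)"
    unfolding F_Union using sub[OF AB] sub[OF BA] by (rule equalityI)
  then show "(\<Union>A, \<Union>B) \<in> K k" using ratfam_Reg[OF A] ratfam_Reg[OF B] by (simp add: K_def)
qed

lemma gens_K: "gens k \<subseteq> K k"
proof
  fix x assume "x \<in> gens k"
  then obtain i j where x: "x = ({[P i]} @@ {[Q j]}, if i = j then {[]} else {})" "i < k" "j < k"
    by (auto simp: gens_def)
  have "{[P i]} @@ {[Q j]} = {[P i, Q j]}" by (auto simp: conc_def)
  moreover have "{[P i, Q j]} \<in> Reg k" using x by (intro Reg_word) (auto simp: Delta_def)
  moreover have "(if i = j then {[]} else {}) \<in> Reg k" by (simp add: Reg_unit Reg_empty)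
  moreover have "F {[P i, Q j]} = F (if i = j then {[]} else {})"
    using F_gen[of i j] \<open>{[P i]} @@ {[Q j]} = {[P i, Q j]}\<close> by metis
  ultimately show "x \<in> K k" unfolding x(1) K_def mem_Collect_eq case_prod_conv by metis
qed

lemma rho_sub_K: "rho k \<subseteq> K k"
  unfolding rho_def using R_cong_K gens_K by blast

context
  fixes k r
  assumes Rc: "R_cong k r" and G: "gens k \<subseteq> r"
begin

lemma eqv: "equiv (Reg k) r" using Rc by (simp add: R_cong_def semiring_cong_def)
lemma r_refl: "a \<in> Reg k \<Longrightarrow> (a, a) \<in> r" using eqv by (auto simp: equiv_def refl_on_def)
lemma r_sym: "(a, b) \<in> r \<Longrightarrow> (b, a) \<in> r" using eqv by (auto simp: equiv_def sym_def)
lemma r_trans: "(a, b) \<in> r \<Longrightarrow> (b, c) \<in> r \<Longrightarrow> (a, c) \<in> r" using eqv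
  unfolding equiv_def trans_def by blast
lemma r_Reg: "(a, b) \<in> r \<Longrightarrow> a \<in> Reg k \<and> b \<in> Reg k" using eqv
  by (auto simp: equiv_def refl_on_def)
lemma r_union: "(a, b) \<in> r \<Longrightarrow> (c, d) \<in> r \<Longrightarrow> (a \<union> c, b \<union> d) \<in> r"
  using Rc by (simp add: R_cong_def semiring_cong_def)
lemma r_conc: "(a, b) \<in> r \<Longrightarrow> (c, d) \<in> r \<Longrightarrow> (a @@ c, b @@ d) \<in> r"
  using Rc by (simp add: R_cong_def semiring_cong_def)

definition tgt :: "letter list \<Rightarrow> lang" where
  "tgt w = (case red w of None \<Rightarrow> {} | Some p \<Rightarrow> {wd p})"

lemma word_red: "set w \<subseteq> Delta k \<Longrightarrow> ({w}, tgt w) \<in> r"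
proof (induction w)
  case Nil
  then show ?case using r_refl Reg_unit by (simp add: tgt_def red_def)
next
  case (Cons x w)
  have xD: "x \<in> Delta k" and wD: "set w \<subseteq> Delta k" using Cons.prems by auto
  have IH: "({w}, tgt w) \<in> r" using Cons.IH wD .
  have c0: "({[x]} @@ {w}, {[x]} @@ tgt w) \<in> r"
    using r_conc[OF r_refl[OF Reg_word] IH] xD by simp
  have "{[x]} @@ {w} = {x # w}" by (auto simp: conc_def)
  with c0 have c1: "({x # w}, {[x]} @@ tgt w) \<in> r" by simp
  have c2: "({[x]} @@ tgt w, tgt (x # w)) \<in> r"
  proof (cases "red w")
    case None
    then show ?thesis using r_refl Reg_empty by (simp add: tgt_def red_def conc_def)
  next
    case (Some p)
    obtain u v where p: "p = (u, v)" by fastforce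
    have tw: "tgt w = {wd (u, v)}" using Some p by (simp add: tgt_def)
    have wdD: "set (wd (u, v)) \<subseteq> Delta k" using r_Reg[OF IH] tw Reg_iff_word by simp
    have rx: "red (x # w) = lstep x (Some (u, v))" using Some p by (simp add: red_def)
    have cx: "{[x]} @@ tgt w = {x # wd (u, v)}" using tw by (auto simp: conc_def)
    have Rx: "{x # wd (u, v)} \<in> Reg k" using wdD xD Reg_word by simp
    show ?thesis
    proof (cases x)
      case (Q j)
      then have "tgt (x # w) = {x # wd (u, v)}" using rx by (simp add: tgt_def)
      then show ?thesis using cx Rx r_refl by simp
    next
      case (P i)
      show ?thesis
      proof (cases u)
        case Nil
        then have "tgt (x # w) = {x # wd (u, v)}" using rx P by (simp add: tgt_def)
        then show ?thesis using cx Rx r_refl by simp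
      next
        case (Cons j u')
        have ij: "i < k" "j < k" using wdD xD P Cons by (auto simp: Delta_def)
        have gen: "({[P i]} @@ {[Q j]}, if i = j then {[]} else {}) \<in> r"
          using G ij unfolding gens_def by blast
        have restD: "set (wd (u', v)) \<subseteq> Delta k" using wdD Cons by auto
        have "(({[P i]} @@ {[Q j]}) @@ {wd (u', v)}, (if i = j then {[]} else {}) @@ {wd (u', v)}) \<in> r"
          using r_conc[OF gen r_refl[OF Reg_word[OF restD]]] .
        moreover have "({[P i]} @@ {[Q j]}) @@ {wd (u', v)} = {x # wd (u, v)}"
          using P Cons by (auto simp: conc_def)
        moreover have "(if i = j then {[]} else {}) @@ {wd (u', v)} = tgt (x # w)"
          using rx P Cons by (auto simp: conc_def tgt_def)
        ultimately show ?thesis using cx by simp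
      qed
    qed
  qed
  show ?case by (rule r_trans[OF c1 c2])
qed

lemma K_sub_r: "K k \<subseteq> r"
proof
  fix x assume "x \<in> K k"
  then obtain a b where x: "x = (a, b)" "a \<in> Reg k" "b \<in> Reg k" "F a = F b" by (auto simp: K_def)
  define A where "A = {{}} \<union> (\<lambda>w. {w}) ` a"
  define B where "B = {{}} \<union> (\<lambda>w. {w}) ` b"
  have fA: "ratfam k A" unfolding A_def ratfam_def
    by (rule rat_union[OF rat_single[OF Reg_empty] ratfam_sing[OF x(2), unfolded ratfam_def]])
  have fB: "ratfam k B" unfolding B_def ratfam_def
    by (rule rat_union[OF rat_single[OF Reg_empty] ratfam_sing[OF x(3), unfolded ratfam_def]])
  have UA: "\<Union>A = a" and UB: "\<Union>B = b" by (auto simp: A_def B_def)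
  have dom: "\<forall>X\<in>{{}} \<union> (\<lambda>w. {w}) ` a. \<exists>Y\<in>{{}} \<union> (\<lambda>w. {w}) ` b. leq_mod r X Y"
    if ab: "a \<in> Reg k" "b \<in> Reg k" "F a = F b" for a b
  proof
    fix X assume "X \<in> {{}} \<union> (\<lambda>w. {w}) ` a"
    then consider "X = {}" | w where "w \<in> a" "X = {w}" by blast
    then show "\<exists>Y\<in>{{}} \<union> (\<lambda>w. {w}) ` b. leq_mod r X Y"
    proof cases
      case 1 then have "leq_mod r X {}" using r_refl[OF Reg_empty] by (simp add: leq_mod_def)
      then show ?thesis by blast
    next
      case 2
      have wD: "set w \<subseteq> Delta k" using Reg_words ab 2 by blast
      have wt: "({w}, tgt w) \<in> r" using word_red[OF wD] .
      show ?thesis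
      proof (cases "red w")
        case None
        then have "leq_mod r X {}" using wt 2 by (simp add: leq_mod_def tgt_def)
        then show ?thesis by blast
      next
        case (Some p)
        then have "p \<in> F b" using ab 2 by (auto simp: F_def)
        then obtain w' where w': "w' \<in> b" "red w' = Some p" by (auto simp: F_def)
        have wD': "set w' \<subseteq> Delta k" using Reg_words ab w' by blast
        have "({w'}, tgt w') \<in> r" using word_red[OF wD'] .
        then have e1: "({w'}, {wd p}) \<in> r" using w' by (simp add: tgt_def)
        have e2: "({w}, {wd p}) \<in> r" using wt Some by (simp add: tgt_def)
        have "({w}, {w'}) \<in> r" by (rule r_trans[OF e2 r_sym[OF e1]])
        then have "({w} \<union> {w'}, {w'} \<union> {w'}) \<in> r"
          by (rule r_union[OF _ r_refl[OF Reg_word[OF wD']]])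
        then have "leq_mod r X {w'}" using 2 by (simp add: leq_mod_def)
        then show ?thesis using w' by blast
      qed
    qed
  qed
  have Rcond: "\<forall>A B. ratfam k A \<longrightarrow> ratfam k B \<longrightarrow>
        (\<forall>a\<in>A. \<exists>b\<in>B. leq_mod r a b) \<longrightarrow> (\<forall>b\<in>B. \<exists>a\<in>A. leq_mod r b a) \<longrightarrow>
        (\<Union>A, \<Union>B) \<in> r" using Rc unfolding R_cong_def by (elim conjE)
  have d1: "\<forall>X\<in>A. \<exists>Y\<in>B. leq_mod r X Y" unfolding A_def B_def by (rule dom[OF x(2) x(3) x(4)])
  have d2: "\<forall>X\<in>B. \<exists>Y\<in>A. leq_mod r X Y" unfolding A_def B_def by (rule dom[OF x(3) x(2) x(4)[symmetric]])
  have "(\<Union>A, \<Union>B) \<in> r" using Rcond fA fB d1 d2 by blast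
  then show "x \<in> r" using UA UB x by simp
qed

end

lemma rho_eq: "rho k = K k"
proof
  show "rho k \<subseteq> K k" by (rule rho_sub_K)
  show "K k \<subseteq> rho k" unfolding rho_def using K_sub_r by blast
qed

lemma leq_rho: "leq_mod (rho k) a b \<longleftrightarrow> a \<union> b \<in> Reg k \<and> b \<in> Reg k \<and> F a \<subseteq> F b"
  by (auto simp: rho_eq leq_mod_def K_def F_union)


section \<open>The embedding\<close>

definition cn :: "nat \<Rightarrow> nat list" where
  "cn j = 1 # replicate j 0 @ [1]"

fun gl :: "letter \<Rightarrow> letter list" where
  "gl (P i) = map P (cn i)"
| "gl (Q j) = map Q (cn j)"

definition gw :: "letter list \<Rightarrow> letter list" where
  "gw w = concat (map gl w)"

definition gg :: "lang \<Rightarrow> lang" where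
  "gg L = gw ` L"

fun gh :: "nat list \<times> nat list \<Rightarrow> nat list \<times> nat list" where
  "gh (u, v) = (concat (map cn u), concat (map cn v))"

declare gh.simps[simp del]

lemma gh_pair: "gh (u, v) = (concat (map cn u), concat (map cn v))" by (rule gh.simps)

lemma red_app2: "red (xs @ ys) = foldr lstep xs (red ys)" by (simp add: red_def)

lemma gw_append: "gw (u @ v) = gw u @ gw v" by (simp add: gw_def)

lemma rep_P0: "foldr lstep (replicate i (P 0)) (Some (replicate j 0 @ [1], [])) =
   (if i \<le> j then Some (replicate (j - i) 0 @ [1], []) else None)"
proof (induction i)
  case 0 then show ?case by simp
next
  case (Suc i)
  show ?case
  proof (cases "i < j")
    case True
    then obtain d where "j - i = Suc d" by (metis Suc_diff_Suc)
    then show ?thesis using Suc True by simp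
  next
    case False
    then show ?thesis using Suc by (cases "i = j") auto
  qed
qed

lemma red_mapQ: "red (map Q u) = Some (u, [])"
  using red_wd[of "(u, [])"] by simp

lemma red_pair: "red (gl (P i) @ gl (Q j)) = (if i = j then Some ([], []) else None)"
proof -
  have "red (gl (P i) @ gl (Q j)) = foldr lstep (gl (P i)) (Some (cn j, []))"
    by (simp only: red_app2 red_mapQ gl.simps)
  also have "\<dots> = lstep (P 1) (foldr lstep (replicate i (P 0)) (Some (replicate j 0 @ [1], [])))"
    by (simp add: cn_def)
  also have "\<dots> = (if i = j then Some ([], []) else None)"
  proof (cases "i < j")
    case True
    then obtain d where d: "j - i = Suc d" by (metis Suc_diff_Suc)
    have "foldr lstep (replicate i (P 0)) (Some (replicate j 0 @ [1], [])) = Some (replicate (j - i) 0 @ [1], [])"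
      using rep_P0[of i j] True by simp
    then show ?thesis using True d by simp
  next
    case False
    show ?thesis
    proof (cases "i = j")
      case True
      have "foldr lstep (replicate i (P 0)) (Some (replicate j 0 @ [1], [])) = Some ([1], [])"
        using rep_P0[of i j] True by simp
      then show ?thesis using True by simp
    next
      case ne: False
      have "foldr lstep (replicate i (P 0)) (Some (replicate j 0 @ [1], [])) = None"
        using rep_P0[of i j] False ne by simp
      then show ?thesis using ne by simp
    qed
  qed
  finally show ?thesis .
qed

lemma gw_wd: "gw (wd (u, v)) = wd (gh (u, v))"
  by (simp add: gw_def map_concat comp_def gh_pair)

lemma red_gw: "red (gw w) = map_option gh (red w)"
proof (induction w)
  case Nil then show ?case by (simp add: gw_def red_def gh_pair)
next
  case (Cons x w)
  have e: "red (gw (x # w)) = rmul (red (gl x)) (map_option gh (red w))"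
    using Cons by (simp add: gw_def red_append)
  show ?case
  proof (cases "red w")
    case None
    then show ?thesis using e by (simp add: rmul_None2 red_def)
  next
    case (Some p)
    obtain u v where p: "p = (u, v)" by fastforce
    have "red (gw (x # w)) = rmul (red (gl x)) (red (wd (gh (u, v))))"
      using e Some p by (simp only: red_wd option.map)
    also have "\<dots> = red (gl x @ wd (gh (u, v)))" by (simp add: red_append)
    finally have e2: "red (gw (x # w)) = red (gl x @ wd (gh (u, v)))" .
    have rx: "red (x # w) = lstep x (Some (u, v))" using Some p by (simp add: red_def)
    show ?thesis
    proof (cases x)
      case (Q j)
      have "gl x @ wd (gh (u, v)) = wd (gh (j # u, v))" using Q by (simp add: gh_pair)
      then have "red (gw (x # w)) = Some (gh (j # u, v))" using e2 red_wd by metis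
      then show ?thesis using rx Q by simp
    next
      case (P i)
      show ?thesis
      proof (cases u)
        case Nil
        have "gl x @ wd (gh (u, v)) = wd (gh ([], i # v))" using P Nil by (simp add: gh_pair)
        then have "red (gw (x # w)) = Some (gh ([], i # v))" using e2 red_wd by metis
        then show ?thesis using rx P Nil by simp
      next
        case (Cons j u')
        have "gl x @ wd (gh (u, v)) = (gl (P i) @ gl (Q j)) @ wd (gh (u', v))"
          using P Cons by (simp only: gl.simps gh_pair wd.simps) simp
        then have "red (gw (x # w)) = rmul (red (gl (P i) @ gl (Q j))) (Some (gh (u', v)))"
          using e2 by (simp only: red_append red_wd)
        then show ?thesis using rx P Cons by (simp add: red_pair del: gl.simps)
      qed
    qed
  qed
qed

lemma F_gg: "F (gg L) = gh ` F L"
proof (rule set_eqI)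
  fix x
  have "x \<in> F (gg L) \<longleftrightarrow> (\<exists>w\<in>L. map_option gh (red w) = Some x)"
    by (auto simp: F_def gg_def red_gw)
  also have "\<dots> \<longleftrightarrow> x \<in> gh ` F L" by (auto simp: F_def)
  finally show "x \<in> F (gg L) \<longleftrightarrow> x \<in> gh ` F L" .
qed

lemma rep01: "replicate j (0::nat) @ 1 # xs = replicate j' 0 @ 1 # ys \<Longrightarrow> j = j' \<and> xs = ys"
proof (induction j arbitrary: j')
  case 0 then show ?case by (cases j') auto
next
  case (Suc j) then show ?case by (cases j') auto
qed

lemma concat_cn_inj: "concat (map cn u) = concat (map cn u') \<Longrightarrow> u = u'"
proof (induction u arbitrary: u')
  case Nil then show ?case by (cases u') (auto simp: cn_def)
next
  case (Cons j u)
  then obtain j' u'' where u': "u' = j' # u''" by (cases u') (auto simp: cn_def)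
  have "cn j @ concat (map cn u) = cn j' @ concat (map cn u'')"
    using Cons.prems u' by simp
  then have "replicate j 0 @ 1 # concat (map cn u) = replicate j' 0 @ 1 # concat (map cn u'')"
    unfolding cn_def[of j] cn_def[of j'] by simp
  then show ?case using rep01 Cons.IH u' by blast
qed

lemma inj_gh: "inj gh"
proof (rule injI)
  fix x y assume h: "gh x = gh y"
  obtain a b c d where xy: "x = (a, b)" "y = (c, d)" by fastforce
  have "concat (map cn a) = concat (map cn c)" "concat (map cn b) = concat (map cn d)"
    using h xy by (simp_all add: gh_pair)
  then show "x = y" using concat_cn_inj xy by blast
qed

lemma gl_Delta: "set (gl x) \<subseteq> Delta 2"
  by (cases x) (auto simp: cn_def Delta_def)

lemma gw_Delta: "set (gw w) \<subseteq> Delta 2"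
  using gl_Delta by (auto simp: gw_def)

lemma gw_setmult: "gw ` setmult (@) A B = gw ` A @@ gw ` B"
proof (rule set_eqI, rule iffI)
  fix y assume "y \<in> gw ` setmult (@) A B"
  then obtain a b where "a \<in> A" "b \<in> B" "y = gw (a @ b)" by (auto simp: setmult_def)
  then show "y \<in> gw ` A @@ gw ` B" unfolding conc_def gw_append by blast
next
  fix y assume "y \<in> gw ` A @@ gw ` B"
  then obtain a b where "a \<in> A" "b \<in> B" "y = gw a @ gw b" by (auto simp: conc_def)
  then have "y = gw (a @ b)" "a @ b \<in> setmult (@) A B" by (auto simp: gw_append setmult_def)
  then show "y \<in> gw ` setmult (@) A B" by blast
qed

lemma gw_mstar: "gw ` mstar (@) [] A = mstar (@) [] (gw ` A)"
proof
  show "gw ` mstar (@) [] A \<subseteq> mstar (@) [] (gw ` A)"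
  proof
    fix y assume "y \<in> gw ` mstar (@) [] A"
    then obtain x where x: "x \<in> mstar (@) [] A" "y = gw x" by blast
    from x(1) have "gw x \<in> mstar (@) [] (gw ` A)"
      by (induction rule: mstar.induct) (auto simp: gw_append gw_def intro: mstar.intros)
    then show "y \<in> mstar (@) [] (gw ` A)" using x by simp
  qed
next
  show "mstar (@) [] (gw ` A) \<subseteq> gw ` mstar (@) [] A"
  proof
    fix y assume "y \<in> mstar (@) [] (gw ` A)"
    then show "y \<in> gw ` mstar (@) [] A"
    proof (induction rule: mstar.induct)
      case mstar_one
      have "[] \<in> mstar (@) [] A" by (rule mstar.intros)
      then show ?case by (force simp: gw_def)
    next
      case (mstar_step a y)
      then obtain a0 x where "a = gw a0" "a0 \<in> A" "y = gw x" "x \<in> mstar (@) [] A" by blast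
      moreover then have "a0 @ x \<in> mstar (@) [] A" by (intro mstar.intros)
      ultimately show ?case by (metis gw_append image_eqI)
    qed
  qed
qed

lemma gg_Reg: "L \<in> Reg m \<Longrightarrow> gg L \<in> Reg 2"
proof -
  assume "L \<in> Reg m"
  then have "rat (UU m) (@) [] L" by (simp add: Reg_def)
  then show "gg L \<in> Reg 2" unfolding gg_def
  proof (induction rule: rat.induct)
    case rat_empty then show ?case by (simp add: Reg_empty)
  next
    case (rat_single a)
    then obtain x where "a = [x]" by blast
    then have "gw ` {a} = {gw [x]}" by simp
    then show ?case using Reg_word gw_Delta by metis
  next
    case rat_union then show ?case by (simp add: image_Un Reg_union)
  next
    case (rat_prod A B)
    then show ?case using Reg_conc by (simp add: gw_setmult)
  next
    case (rat_star A) then show ?case by (simp add: gw_mstar Reg_star)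
  qed
qed

lemma gg_union: "gg (a \<union> b) = gg a \<union> gg b" by (simp add: gg_def image_Un)
lemma gg_conc: "gg (a @@ b) = gg a @@ gg b"
  using gw_setmult[of a b] by (simp add: gg_def conc_setmult)

lemma F_single: "F {w} = (case red w of None \<Rightarrow> {} | Some r \<Rightarrow> {r})"
  by (auto simp: F_def split: option.splits)


theorem lemma1:
  fixes m :: nat
  assumes "m \<ge> 2"
  shows "\<exists>g. R_morph m 2 g \<and> inj_mod m 2 g \<and>
    (\<forall>i<m. \<forall>j<m.
       (g {[P i]} @@ g {[Q j]}, if i = j then {[]} else {}) \<in> rho 2 \<and>
       ({[P 0]} @@ g {[Q j]}, {}) \<in> rho 2 \<and>
       (g {[P i]} @@ {[Q 0]}, {}) \<in> rho 2)"
proof (intro exI conjI allI impI)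
  show "R_morph m 2 gg"
    unfolding R_morph_def
  proof (intro conjI allI impI ballI)
    fix L assume "L \<in> Reg m" then show "gg L \<in> Reg 2" by (rule gg_Reg)
  next
    fix a b assume "(a, b) \<in> rho m"
    then show "(gg a, gg b) \<in> rho 2" by (auto simp: rho_eq K_mem gg_Reg F_gg)
  next
    show "(gg {}, {}) \<in> rho 2" by (simp add: rho_eq K_mem gg_def Reg_empty)
  next
    show "(gg {[]}, {[]}) \<in> rho 2" by (simp add: rho_eq K_mem gg_def gw_def Reg_unit)
  next
    fix a b assume "a \<in> Reg m" "b \<in> Reg m"
    then show "(gg (a \<union> b), gg a \<union> gg b) \<in> rho 2" "(gg (a @@ b), gg a @@ gg b) \<in> rho 2"
      by (auto simp: rho_eq K_mem gg_union gg_conc Reg_union Reg_conc gg_Reg)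
  next
    fix A s assume fA: "ratfam m A" and lub: "is_lub_mod m A s"
    have sR: "s \<in> Reg m" and ub: "\<forall>a\<in>A. leq_mod (rho m) a s"
      and least: "\<forall>c\<in>Reg m. (\<forall>a\<in>A. leq_mod (rho m) a c) \<longrightarrow> leq_mod (rho m) s c"
      using lub by (auto simp: is_lub_mod_def)
    have UR: "\<Union>A \<in> Reg m" and AR: "\<forall>X\<in>A. X \<in> Reg m" using ratfam_Reg[OF fA] by auto
    have "\<forall>a\<in>A. leq_mod (rho m) a (\<Union>A)"
    proof
      fix a assume "a \<in> A"
      then have "a \<union> \<Union>A = \<Union>A" by blast
      then show "leq_mod (rho m) a (\<Union>A)" using UR \<open>a \<in> A\<close> by (simp add: leq_rho F_Union) blast
    qed
    then have "leq_mod (rho m) s (\<Union>A)" using least UR by blast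
    then have Fs1: "F s \<subseteq> (\<Union>a\<in>A. F a)" by (simp add: leq_rho F_Union)
    have Fs2: "\<forall>a\<in>A. F a \<subseteq> F s" using ub by (simp add: leq_rho)
    have asR: "\<forall>a\<in>A. a \<union> s \<in> Reg m" using ub by (simp add: leq_rho)
    show "is_lub_mod 2 (gg ` A) (gg s)"
      unfolding is_lub_mod_def
    proof (intro conjI ballI impI)
      show "gg s \<in> Reg 2" using sR by (rule gg_Reg)
    next
      fix x assume "x \<in> gg ` A"
      then obtain a where a: "a \<in> A" "x = gg a" by blast
      show "leq_mod (rho 2) x (gg s)"
        unfolding leq_rho a(2)
        using a(1) asR Fs2 sR by (auto simp: gg_union[symmetric] gg_Reg F_gg)
    next
      fix c assume cR: "c \<in> Reg 2" and hc: "\<forall>a\<in>gg ` A. leq_mod (rho 2) a c"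
      have "\<forall>a\<in>A. F (gg a) \<subseteq> F c" using hc by (simp add: leq_rho)
      then have "F (gg s) \<subseteq> F c" unfolding F_gg using Fs1 by blast
      then show "leq_mod (rho 2) (gg s) c"
        using cR sR by (simp add: leq_rho Reg_union gg_Reg)
    qed
  qed
next
  show "inj_mod m 2 gg"
    unfolding inj_mod_def
  proof (intro ballI impI)
    fix a b assume "a \<in> Reg m" "b \<in> Reg m" "(gg a, gg b) \<in> rho 2"
    then have "gh ` F a = gh ` F b" by (simp add: rho_eq K_mem F_gg)
    then have "F a = F b" using inj_gh by (simp add: inj_image_eq_iff)
    then show "(a, b) \<in> rho m" using \<open>a \<in> Reg m\<close> \<open>b \<in> Reg m\<close> by (simp add: rho_eq K_mem)
  qed
next
  fix i j assume "i < m" "j < m"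
  have ggP: "gg {[P i]} = {gl (P i)}" and ggQ: "gg {[Q j]} = {gl (Q j)}" by (simp_all add: gg_def gw_def)
  have D: "set (gl (P i) @ gl (Q j)) \<subseteq> Delta 2"
    using gl_Delta[of "P i"] gl_Delta[of "Q j"] by (simp del: gl.simps)
  have "gg {[P i]} @@ gg {[Q j]} = {gl (P i) @ gl (Q j)}" by (simp add: ggP ggQ conc_def)
  moreover have "F {gl (P i) @ gl (Q j)} = F (if i = j then {[]} else {})"
  proof -
    have "F {gl (P i) @ gl (Q j)} = (if i = j then {([], [])} else {})"
      using red_pair[of i j] by (simp add: F_single del: gl.simps)
    moreover have "F (if i = j then {[]} else {}) = (if i = j then {([], [])} else {})"
      by (simp add: F_single F_empty red_def)
    ultimately show ?thesis by simp
  qed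
  ultimately show "(gg {[P i]} @@ gg {[Q j]}, if i = j then {[]} else {}) \<in> rho 2"
    using Reg_word[OF D] by (simp add: rho_eq K_mem Reg_unit Reg_empty)
next
  fix j
  have e: "{[P 0]} @@ gg {[Q j]} = {P 0 # gl (Q j)}" by (simp add: gg_def gw_def conc_def del: gl.simps)
  have d: "set (P 0 # gl (Q j)) \<subseteq> Delta 2"
    using gl_Delta[of "Q j"] by (simp add: Delta_def del: gl.simps)
  have "red (P 0 # gl (Q j)) = None"
    using red_mapQ[of "cn j"] by (simp add: red_def cn_def)
  then have f: "F {P 0 # gl (Q j)} = {}" by (simp add: F_single del: gl.simps)
  show "({[P 0]} @@ gg {[Q j]}, {}) \<in> rho 2"
    unfolding e rho_eq K_mem using Reg_word[OF d] Reg_empty f F_empty by blast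
next
  fix i
  have e: "gg {[P i]} @@ {[Q 0]} = {gl (P i) @ [Q 0]}" by (simp add: gg_def gw_def conc_def del: gl.simps)
  have d: "set (gl (P i) @ [Q 0]) \<subseteq> Delta 2"
    using gl_Delta[of "P i"] by (simp add: Delta_def del: gl.simps)
  have "red (gl (P i) @ [Q 0]) = None"
    by (simp add: red_def cn_def foldr_None del: foldr_replicate)
  then have f: "F {gl (P i) @ [Q 0]} = {}" by (simp add: F_single del: gl.simps)
  show "(gg {[P i]} @@ {[Q 0]}, {}) \<in> rho 2"
    unfolding e rho_eq K_mem using Reg_word[OF d] Reg_empty f F_empty by blast
qed

end
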